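(* Let $R>0$, let $(E,d)$ be a metric space whose Borel $\sigma$-algebra makes it a standard Borel space, let $\nu$ be a Radon probability measure, and let $A\subset\mathrm{Supp}(\nu)$ be closed; assume that for every $\sigma>0$ the problem $\inf_\mu\{\mathrm{Ent}_\nu(\mu):\mu(E)=1,\ \int_E d_R(x,A)^2\,d\mu(x)\le\sigma^2\}$ is attained by a unique measure. For $a>0$ let $$d\mu_{a,R}(x)=\frac{\exp(-a\,d_R(x,A)^2)}{\int_E\exp(-a\,d_R(y,A)^2)\,d\nu(y)}\,d\nu(x).$$ Let $0<\varepsilon<R$. Then $\mu_{a,R}\big(E\setminus A^{\varepsilon}\big)\to0$ as $a\to\infty$, where $A^\varepsilon=\{x\in E: d^2(x,A)\le\varepsilon\}$.
   Context: $d(x,A)=\inf_{y\in A}d(x,y)$, $d_R=\min(d,R)$; $\mathrm{Ent}_\nu(\mu)=\int\frac{d\mu}{d\nu}\ln\frac{d\mu}{d\nu}\,d\nu$ if $\mu\ll\nu$, $+\infty$ otherwise; $\mathrm{Supp}(\nu)$ is the complement of the union of all $\nu$-null open sets. *)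

theory Defs
  imports "HOL-Analysis.Analysis" "HOL-Probability.Probability"
begin

text \<open>Distance to a set, d(x,A) = inf over y in A of d(x,y), valued in the extended reals
  (so that the infimum over the empty set is +infinity, as in the paper).\<close>
definition setdist_e :: "'a::metric_space set \<Rightarrow> 'a \<Rightarrow> ereal" where
  "setdist_e A x = (INF y\<in>A. ereal (dist x y))"

definition dR :: "real \<Rightarrow> 'a::metric_space set \<Rightarrow> 'a \<Rightarrow> real" where
  "dR R A x = real_of_ereal (min (setdist_e A x) (ereal R))"

definition enlarg :: "'a::metric_space set \<Rightarrow> real \<Rightarrow> 'a set" where
  "enlarg A eps = {x. (setdist_e A x)^2 \<le> ereal eps}"

definition Supp :: "'a::topological_space measure \<Rightarrow> 'a set" where
  "Supp \<nu> = UNIV - \<Union>{U. open U \<and> emeasure \<nu> U = 0}"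

definition radon_measure :: "'a::metric_space measure \<Rightarrow> bool" where
  "radon_measure \<nu> \<longleftrightarrow> sets \<nu> = sets borel \<and>
     (\<forall>x. \<exists>U. open U \<and> x \<in> U \<and> emeasure \<nu> U < \<infinity>) \<and>
     (\<forall>B\<in>sets \<nu>. emeasure \<nu> B = (SUP K\<in>{K. compact K \<and> K \<subseteq> B}. emeasure \<nu> K))"

definition standard_borel_space :: "'a measure \<Rightarrow> bool" where
  "standard_borel_space M \<longleftrightarrow> (\<exists>T. completely_metrizable_space T \<and> separable_space T \<and>
     topspace T = space M \<and> sets M = sigma_sets (space M) {U. openin T U})"

text \<open>Relative entropy Ent_nu(mu) = int (dmu/dnu) ln (dmu/dnu) dnu if mu << nu, +infinity
  otherwise.  The integrand is bounded below, so the integral is split into its positive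
  and negative parts.\<close>
definition Ent :: "'a measure \<Rightarrow> 'a measure \<Rightarrow> ereal" where
  "Ent \<nu> \<mu> = (if sets \<mu> = sets \<nu> \<and> absolutely_continuous \<nu> \<mu> then
      (let f = (\<lambda>x. enn2real (RN_deriv \<nu> \<mu> x)) in
        enn2ereal (\<integral>\<^sup>+ x. ennreal (f x * ln (f x)) \<partial>\<nu>)
        - enn2ereal (\<integral>\<^sup>+ x. ennreal (- (f x * ln (f x))) \<partial>\<nu>))
    else \<infinity>)"

definition admissible :: "real \<Rightarrow> 'a::metric_space set \<Rightarrow> real \<Rightarrow> 'a measure set" where
  "admissible R A \<sigma> = {\<mu>. sets \<mu> = sets borel \<and> emeasure \<mu> UNIV = 1 \<and>
      (\<integral>x. (dR R A x)^2 \<partial>\<mu>) \<le> \<sigma>^2}"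

definition mu_aR :: "'a::metric_space measure \<Rightarrow> 'a set \<Rightarrow> real \<Rightarrow> real \<Rightarrow> 'a measure" where
  "mu_aR \<nu> A R a = density \<nu> (\<lambda>x. ennreal (exp (- a * (dR R A x)^2)
       / (\<integral>y. exp (- a * (dR R A y)^2) \<partial>\<nu>)))"

end

theory Submission
  imports Defs "HOL-Real_Asymp.Real_Asymp"
begin

lemma setdist_e_eq:
  assumes "A \<noteq> {}"
  shows "setdist_e A x = ereal (infdist x A)"
proof -
  have "bdd_below ((\<lambda>y. dist x y) ` A)" by (rule bdd_belowI[of _ 0]) auto
  then have "ereal (Inf ((\<lambda>y. dist x y) ` A)) = Inf (ereal ` (\<lambda>y. dist x y) ` A)"
    using assms by (intro ereal_Inf') auto
  then show ?thesis using assms unfolding setdist_e_def infdist_def by (simp add: image_comp)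
qed

lemma dR_eq:
  assumes "A \<noteq> {}"
  shows "dR R A x = min (infdist x A) R"
  unfolding dR_def setdist_e_eq[OF assms] by (simp flip: ereal_min)

lemma dR_empty: "dR R {} x = R"
  unfolding dR_def setdist_e_def by simp

theorem lemmaB1:
  fixes \<nu> :: "'a::metric_space measure" and A :: "'a set" and R \<epsilon> :: real
  assumes "R > 0"
    and "standard_borel_space (borel :: 'a measure)"
    and "prob_space \<nu>" and "radon_measure \<nu>"
    and "closed A" and "A \<subseteq> Supp \<nu>"
    and "\<forall>\<sigma>>0. \<exists>!\<mu>. \<mu> \<in> admissible R A \<sigma> \<and>
                 Ent \<nu> \<mu> = (INF \<mu>'\<in>admissible R A \<sigma>. Ent \<nu> \<mu>')"
    and "0 < \<epsilon>" and "\<epsilon> < R"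
  shows "((\<lambda>a. measure (mu_aR \<nu> A R a) (UNIV - enlarg A \<epsilon>)) \<longlongrightarrow> 0) at_top"
proof -
  interpret P: prob_space \<nu> by fact
  have setsnu: "sets \<nu> = sets borel" using assms(4) unfolding radon_measure_def by auto
  have spnu: "space \<nu> = UNIV" using sets_eq_imp_space_eq[OF setsnu] by simp
  have Ane: "A \<noteq> {}"
  proof
    assume A0: "A = {}"
    have "R/2 > 0" using assms(1) by simp
    then obtain \<mu> where mu: "\<mu> \<in> admissible R A (R/2)" using assms(7) by blast
    then have sm: "sets \<mu> = sets borel" and m1: "emeasure \<mu> UNIV = 1"
      and int: "(\<integral>x. (dR R A x)^2 \<partial>\<mu>) \<le> (R/2)^2" unfolding admissible_def by auto
    have spm: "space \<mu> = UNIV" using sets_eq_imp_space_eq[OF sm] by simp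
    have "measure \<mu> UNIV = 1" using m1 by (simp add: measure_def)
    then have "(\<integral>x. (dR R A x)^2 \<partial>\<mu>) = R^2" using A0 spm by (simp add: dR_empty)
    then show False using int assms(1) by (simp add: power2_eq_square)
  qed
  define f where "f x = (min (infdist x A) R)^2" for x
  have dRf: "(dR R A x)^2 = f x" for x unfolding f_def dR_eq[OF Ane] by simp
  have contf: "continuous_on UNIV f" unfolding f_def
    by (intro continuous_intros)
  have fmeas: "f \<in> borel_measurable \<nu>"
    using borel_measurable_continuous_onI[OF contf] measurable_cong_sets[OF setsnu refl] by blast
  have f0: "0 \<le> f x" for x unfolding f_def by simp
  have fR: "f x \<le> R^2" for x unfolding f_def using assms(1) infdist_nonneg[of x A]
    by (intro power_mono) auto
  define c where "c = min \<epsilon> (R^2)"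
  have cpos: "c > 0" unfolding c_def using assms by simp
  define S where "S = UNIV - enlarg A \<epsilon>"
  have S_eq: "S = {x. \<epsilon> < (infdist x A)^2}"
    unfolding S_def enlarg_def setdist_e_eq[OF Ane] by auto
  have Sc: "f x \<ge> c" if "x \<in> S" for x
  proof (cases "infdist x A \<le> R")
    case True
    then show ?thesis using that S_eq unfolding f_def c_def by auto
  next
    case False
    then show ?thesis unfolding f_def c_def by auto
  qed
  have Ssets: "S \<in> sets \<nu>"
  proof -
    have "continuous_on UNIV (\<lambda>x. (infdist x A)^2)" by (intro continuous_intros)
    then have "(\<lambda>x. (infdist x A)^2) \<in> borel_measurable \<nu>"
      using borel_measurable_continuous_onI measurable_cong_sets[OF setsnu refl] by blast
    then have "{x \<in> space \<nu>. \<epsilon> < (infdist x A)^2} \<in> sets \<nu>" by measurable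
    then show ?thesis using S_eq spnu by simp
  qed
  obtain y where yA: "y \<in> A" using Ane by blast
  define r where "r = sqrt (c/2)"
  define B where "B = ball y r"
  have fB: "f x \<le> c/2" if "x \<in> B" for x
  proof -
    have "infdist x A \<le> dist x y" using yA by (rule infdist_le)
    also have "\<dots> < r" using that unfolding B_def by (simp add: dist_commute)
    finally have "min (infdist x A) R \<le> r" by simp
    then have "f x \<le> r^2" unfolding f_def using infdist_nonneg[of x A] assms(1)
      by (intro power_mono) auto
    then show ?thesis unfolding r_def using cpos by simp
  qed
  have Bsets: "B \<in> sets \<nu>" unfolding B_def setsnu by simp
  have "emeasure \<nu> B \<noteq> 0"
  proof
    assume "emeasure \<nu> B = 0"
    moreover have "y \<in> B" unfolding B_def r_def using cpos by simp
    ultimately have "y \<notin> Supp \<nu>" unfolding Supp_def B_def by auto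
    then show False using yA assms(6) by auto
  qed
  then have mpos: "measure \<nu> B > 0"
    using P.emeasure_eq_measure[of B] by (simp add: zero_less_measure_iff)
  define Z where "Z a = (\<integral>x. exp (- a * f x) \<partial>\<nu>)" for a
  have intg: "integrable \<nu> (\<lambda>x. exp (- a * f x))" for a
  proof (rule P.integrable_const_bound[where B="exp (\<bar>a\<bar> * R^2)"])
    have "- a * f x \<le> \<bar>a\<bar> * R^2" for x
    proof -
      have "- a * f x \<le> \<bar>a\<bar> * f x" using f0[of x] by (intro mult_right_mono) auto
      also have "\<dots> \<le> \<bar>a\<bar> * R^2" using fR[of x] by (intro mult_left_mono) auto
      finally show ?thesis .
    qed
    then show "AE x in \<nu>. norm (exp (- a * f x)) \<le> exp (\<bar>a\<bar> * R^2)" by simp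
    show "(\<lambda>x. exp (- a * f x)) \<in> borel_measurable \<nu>" using fmeas by measurable
  qed
  have Zlow: "Z a \<ge> measure \<nu> B * exp (- a * (c/2))" if "a \<ge> 0" for a
  proof -
    have "measure \<nu> B * exp (- a * (c/2)) = (\<integral>x. indicator B x * exp (- a * (c/2)) \<partial>\<nu>)"
      using Bsets by simp
    also have "\<dots> \<le> Z a" unfolding Z_def
      using Bsets that fB
    proof (intro integral_mono intg)
      show "integrable \<nu> (\<lambda>x. indicator B x * exp (- a * (c/2)))"
        using Bsets by (intro integrable_mult_left) (simp add: P.emeasure_eq_measure)
      fix x assume "x \<in> space \<nu>"
      show "indicator B x * exp (- a * (c/2)) \<le> exp (- a * f x)"
      proof (cases "x \<in> B")
        case True
        then have "a * f x \<le> a * (c/2)" using fB[OF True] that by (intro mult_left_mono) auto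
        then show ?thesis using True by simp
      qed simp
    qed
    finally show ?thesis .
  qed
  have bound: "measure (mu_aR \<nu> A R a) S \<le> exp (- a * (c/2)) / measure \<nu> B" if "a \<ge> 0" for a
  proof -
    have Zpos: "Z a > 0" using Zlow[OF that] mpos by (smt (verit) exp_gt_zero mult_pos_pos)
    have eq: "mu_aR \<nu> A R a = density \<nu> (\<lambda>x. ennreal (exp (- a * f x) / Z a))"
      unfolding mu_aR_def Z_def dRf by simp
    have gm: "(\<lambda>x. ennreal (exp (- a * f x) / Z a)) \<in> borel_measurable \<nu>"
      using fmeas by measurable
    have "emeasure (mu_aR \<nu> A R a) S = (\<integral>\<^sup>+x. ennreal (exp (- a * f x) / Z a) * indicator S x \<partial>\<nu>)"
      unfolding eq using emeasure_density[OF gm Ssets] by simp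
    also have "\<dots> \<le> (\<integral>\<^sup>+x. ennreal (exp (- a * c) / Z a) \<partial>\<nu>)"
    proof (rule nn_integral_mono)
      fix x
      show "ennreal (exp (- a * f x) / Z a) * indicator S x \<le> ennreal (exp (- a * c) / Z a)"
      proof (cases "x \<in> S")
        case True
        then have "exp (- a * f x) \<le> exp (- a * c)" using Sc[OF True] that
          by (simp add: mult_left_mono)
        then show ?thesis using True Zpos by (simp add: divide_right_mono ennreal_leI)
      qed simp
    qed
    also have "\<dots> = ennreal (exp (- a * c) / Z a)" using P.emeasure_space_1 by simp
    finally have le: "emeasure (mu_aR \<nu> A R a) S \<le> ennreal (exp (- a * c) / Z a)" .
    have "measure (mu_aR \<nu> A R a) S \<le> exp (- a * c) / Z a"
    proof -
      have "enn2real (emeasure (mu_aR \<nu> A R a) S) \<le> enn2real (ennreal (exp (- a * c) / Z a))"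
        using le by (intro enn2real_mono) auto
      then show ?thesis using Zpos by (simp add: measure_def)
    qed
    also have "\<dots> \<le> exp (- a * c) / (measure \<nu> B * exp (- a * (c/2)))"
      using Zlow[OF that] mpos Zpos by (intro divide_left_mono) auto
    also have "\<dots> = exp (- a * (c/2)) / measure \<nu> B"
    proof -
      have "exp (- a * c) = exp (- a * (c/2)) * exp (- a * (c/2))"
        by (simp flip: exp_add)
      then show ?thesis using mpos by (simp add: field_simps)
    qed
    finally show ?thesis .
  qed
  have lim: "((\<lambda>a. exp (- a * (c/2)) / measure \<nu> B) \<longlongrightarrow> 0) at_top"
    using cpos mpos by real_asymp
  show ?thesis unfolding S_def[symmetric]
  proof (rule tendsto_sandwich[OF _ _ tendsto_const lim])
    show "\<forall>\<^sub>F a in at_top. 0 \<le> measure (mu_aR \<nu> A R a) S" by simp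
    show "\<forall>\<^sub>F a in at_top. measure (mu_aR \<nu> A R a) S \<le> exp (- a * (c/2)) / measure \<nu> B"
      using eventually_ge_at_top[of "0::real"] by (rule eventually_mono) (rule bound)
  qed
qed

end
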